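(* Let $\mathcal{X}$ be a finite set, $P_X$ a probability distribution on $\mathcal{X}$, $X\sim P_X$, and $\rho\ge1$. For a probability distribution $\hat P$ on $\mathcal{X}$, let $\hat X_1,\hat X_2,\dots$ be i.i.d. with law $\hat P$, independent of $X$, let $G(X,\hat X_1^\infty)=\inf\{k\ge1:\hat X_k=X\}$ and $$V_\rho(X,\hat X_1^\infty)=\binom{G(X,\hat X_1^\infty)+\rho-1}{\rho}.$$ Define $\mathbb{E}\{V^*_\rho(X,\hat X_1^\infty)\}=\inf_{\hat P}\mathbb{E}\{V_\rho(X,\hat X_1^\infty)\}$, the infimum over the probability simplex on $\mathcal{X}$. Then $$\log\mathbb{E}\{V^*_\rho(X,\hat X_1^\infty)\}=\rho\, H_{\frac{1}{1+\rho}}(X),$$ and the minimizer $\hat P^*_\rho$ is given, for every $x\in\mathcal{X}$, by $$\hat P^*_\rho(x)=\frac{P_X(x)^{\frac{1}{1+\rho}}}{\sum_{x'\in\mathcal{X}}P_X(x')^{\frac{1}{1+\rho}}}.$$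
   Context: The generalized binomial coefficient is $\binom{x}{y}=\frac{\Gamma(x+1)}{\Gamma(y+1)\Gamma(x-y+1)}$. Logarithms are natural. For $\alpha>0,\alpha\ne1$, $H_\alpha(X)=\frac{1}{1-\alpha}\log\sum_{x\in\mathcal{X}}P_X(x)^\alpha$. The expectation is over $X$ and the guesses. *)

theory Defs
  imports "HOL-Probability.Probability"
begin

definition gbinom :: "real \<Rightarrow> real \<Rightarrow> real" where
  "gbinom x y = Gamma (x + 1) / (Gamma (y + 1) * Gamma (x - y + 1))"

definition renyi_entropy :: "real \<Rightarrow> 'a::finite pmf \<Rightarrow> real" where
  "renyi_entropy \<alpha> P = 1 / (1 - \<alpha>) * ln (\<Sum>x\<in>UNIV. pmf P x powr \<alpha>)"

text \<open>Guessing time G = inf {k >= 1. Xhat_k = x}; the guesses are the stream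
  (Xhat_1 = w !! 0, Xhat_2 = w !! 1, ...); inf of the empty set is infinity.\<close>
definition guess_time :: "'a \<Rightarrow> 'a stream \<Rightarrow> enat" where
  "guess_time x w = (if \<exists>k. w !! k = x then enat (Suc (LEAST k. w !! k = x)) else \<infinity>)"

definition V_rho :: "real \<Rightarrow> 'a \<Rightarrow> 'a stream \<Rightarrow> ennreal" where
  "V_rho \<rho> x w = (case guess_time x w of
      enat k \<Rightarrow> ennreal (gbinom (real k + \<rho> - 1) \<rho>)
    | \<infinity> \<Rightarrow> \<infinity>)"

definition expected_V :: "real \<Rightarrow> 'a pmf \<Rightarrow> 'a pmf \<Rightarrow> ennreal" where
  "expected_V \<rho> P Q =
     (\<integral>\<^sup>+ z. V_rho \<rho> (fst z) (snd z) \<partial>(measure_pmf P \<Otimes>\<^sub>M stream_space (measure_pmf Q)))"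

definition opt_expected_V :: "real \<Rightarrow> 'a pmf \<Rightarrow> ennreal" where
  "opt_expected_V \<rho> P = (INF Q. expected_V \<rho> P Q)"

end

theory Submission
  imports Defs
begin


lemma gbinom_poch:
  assumes "\<rho> \<ge> 0"
  shows "gbinom (real (Suc k) + \<rho> - 1) \<rho> = pochhammer (\<rho>+1) k / fact k"
proof -
  have np: "\<rho> + 1 \<notin> \<int>\<^sub>\<le>\<^sub>0" using assms
    using nonpos_Ints_nonpos by fastforce
  have "pochhammer (\<rho>+1) k / fact k = Gamma (\<rho> + 1 + real k) / Gamma (\<rho>+1) / Gamma (1 + real k)"
    by (simp only: pochhammer_Gamma[OF np] Gamma_fact)
  also have "\<dots> = gbinom (real (Suc k) + \<rho> - 1) \<rho>"
    unfolding gbinom_def by (simp add: algebra_simps)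
  finally show ?thesis by simp
qed

lemma gbinom_nonneg:
  assumes "\<rho> \<ge> 0"
  shows "gbinom (real (Suc k) + \<rho> - 1) \<rho> \<ge> 0"
  unfolding gbinom_poch[OF assms] using assms by (simp add: pochhammer_nonneg)

lemma gbinom_coef:
  assumes "\<rho> \<ge> 0"
  shows "gbinom (real (Suc k) + \<rho> - 1) \<rho> = (-1)^k * ((-(\<rho>+1)) gchoose k)"
proof -
  have m1: "(-1::real)^k * (-1)^k = 1"
    by (simp flip: power_mult_distrib)
  have "(-1::real)^k * ((-(\<rho>+1)) gchoose k) = (-1::real)^k * ((- 1) ^ k * pochhammer (\<rho>+1) k / fact k)"
    by (subst gbinomial_pochhammer) (simp add: add.commute)
  also have "\<dots> = pochhammer (\<rho>+1) k / fact k"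
    using m1 by (simp only: mult.assoc[symmetric] times_divide_eq_right)
  also have "\<dots> = gbinom (real (Suc k) + \<rho> - 1) \<rho>"
    using gbinom_poch[OF assms] by simp
  finally show ?thesis by simp
qed

lemma series_V:
  assumes "\<rho> \<ge> 0" "0 < q" "q \<le> 1"
  shows "(\<lambda>k. gbinom (real (Suc k) + \<rho> - 1) \<rho> * ((1-q)^k * q)) sums (q powr -\<rho>)"
proof -
  have "\<bar>q - 1\<bar> < 1" using assms by auto
  from gen_binomial_real[OF this, of "-(\<rho>+1)"]
  have "(\<lambda>n. ((-(\<rho>+1)) gchoose n) * (q-1)^n) sums (q powr (-(\<rho>+1)))" by simp
  from sums_mult2[OF this, of q]
  have s0: "(\<lambda>n. ((-(\<rho>+1)) gchoose n) * (q-1)^n * q) sums (q powr (-(\<rho>+1)) * q)" .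
  have e2: "q powr (-(\<rho>+1)) * q = q powr -\<rho>"
  proof -
    have "q powr (-(\<rho>+1)) * q = q powr (-(\<rho>+1)) * q powr 1" using assms by simp
    also have "\<dots> = q powr (-(\<rho>+1) + 1)" by (simp only: powr_add)
    finally show ?thesis by simp
  qed
  have e3: "((-(\<rho>+1)) gchoose n) * (q-1)^n * q = gbinom (real (Suc n) + \<rho> - 1) \<rho> * ((1-q)^n * q)" for n
  proof -
    have "(q-1)^n = (-1)^n * (1-q)^n" by (metis minus_diff_eq power_minus)
    then show ?thesis using gbinom_coef[OF assms(1), of n]
      by (simp add: algebra_simps)
  qed
  have eq: "(\<lambda>n. ((-(\<rho>+1)) gchoose n) * (q-1)^n * q) = (\<lambda>n. gbinom (real (Suc n) + \<rho> - 1) \<rho> * ((1-q)^n * q))"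
    by (rule ext) (rule e3)
  show ?thesis by (subst eq[symmetric], subst e2[symmetric], rule s0)
qed

lemma guess_time_Cons:
  "guess_time x (y ## w) = (if y = x then enat 1 else eSuc (guess_time x w))"
proof (cases "y = x")
  case True
  then have h0: "(y ## w) !! 0 = x" by simp
  then have "(LEAST k. (y ## w) !! k = x) = 0" by (rule Least_eq_0)
  moreover have "\<exists>k. (y ## w) !! k = x" using h0 by blast
  ultimately show ?thesis using True unfolding guess_time_def by (simp add: one_enat_def)
next
  case False
  have ex: "(\<exists>k. (y ## w) !! k = x) \<longleftrightarrow> (\<exists>k. w !! k = x)"
  proof
    assume "\<exists>k. (y ## w) !! k = x"
    then obtain k where k: "(y ## w) !! k = x" by blast
    show "\<exists>k. w !! k = x"
    proof (cases k)
      case 0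
      with k False show ?thesis by simp
    next
      case (Suc j)
      with k have "w !! j = x" by simp
      then show ?thesis by blast
    qed
  next
    assume "\<exists>k. w !! k = x"
    then obtain k where "w !! k = x" by blast
    then have "(y ## w) !! Suc k = x" by simp
    then show "\<exists>k. (y ## w) !! k = x" by blast
  qed
  show ?thesis
  proof (cases "\<exists>k. w !! k = x")
    case True
    then obtain k where "w !! k = x" by blast
    then have k: "(y ## w) !! Suc k = x" by simp
    have n0: "\<not> (y ## w) !! 0 = x" using False by simp
    have "(LEAST k. (y ## w) !! k = x) = Suc (LEAST m. (y ## w) !! Suc m = x)"
      by (rule Least_Suc[OF k n0])
    also have "(\<lambda>m. (y ## w) !! Suc m = x) = (\<lambda>m. w !! m = x)" by simp
    finally have L: "(LEAST k. (y ## w) !! k = x) = Suc (LEAST m. w !! m = x)" .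
    have g1: "guess_time x (y ## w) = enat (Suc (LEAST k. (y ## w) !! k = x))"
      unfolding guess_time_def using True ex by simp
    have g2: "guess_time x w = enat (Suc (LEAST k. w !! k = x))"
      unfolding guess_time_def using True by simp
    show ?thesis using False unfolding g1 g2 L by (simp add: eSuc_enat)
  next
    case nT: False
    then have g1: "guess_time x (y ## w) = \<infinity>" unfolding guess_time_def using ex by simp
    have g2: "guess_time x w = \<infinity>" unfolding guess_time_def using nT by simp
    show ?thesis using False unfolding g1 g2 by simp
  qed
qed

lemma pred_snth[measurable]: "Measurable.pred (stream_space (measure_pmf Q)) (\<lambda>w. w !! k = x)"
proof -
  have "(\<lambda>w. w !! k) \<in> measurable (stream_space (measure_pmf Q)) (count_space UNIV)"
    using measurable_snth[of k "measure_pmf Q"]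
    by (metis measurable_cong_sets measurable_snth sets_measure_pmf_count_space)
  then show ?thesis by (rule measurable_compose) simp
qed

lemma guess_time_meas: "guess_time x \<in> measurable (stream_space (measure_pmf Q)) (count_space UNIV)"
  unfolding guess_time_def by measurable

lemma V_meas: "V_rho \<rho> x \<in> borel_measurable (stream_space (measure_pmf Q))"
proof -
  have "V_rho \<rho> x = (\<lambda>t. case t of enat k \<Rightarrow> ennreal (gbinom (real k + \<rho> - 1) \<rho>) | \<infinity> \<Rightarrow> \<infinity>) \<circ> guess_time x"
    by (auto simp: V_rho_def fun_eq_iff)
  also have "\<dots> \<in> borel_measurable (stream_space (measure_pmf Q))"
    by (rule measurable_comp[OF guess_time_meas]) simp
  finally show ?thesis .
qed



lemma guess_time_nz: "guess_time x w \<noteq> enat 0"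
  unfolding guess_time_def by auto

lemma A0_Cons: "guess_time x (y ## w) = enat (Suc 0) \<longleftrightarrow> y = x"
proof (cases "guess_time x w")
  case (enat n)
  then show ?thesis using guess_time_nz[of x w]
    by (auto simp: guess_time_Cons eSuc_enat one_enat_def)
next
  case infinity
  then show ?thesis by (auto simp: guess_time_Cons one_enat_def)
qed

lemma AS_Cons: "guess_time x (y ## w) = enat (Suc (Suc k)) \<longleftrightarrow> y \<noteq> x \<and> guess_time x w = enat (Suc k)"
proof (cases "guess_time x w")
  case (enat n)
  then show ?thesis
    by (auto simp: guess_time_Cons eSuc_enat one_enat_def)
next
  case infinity
  then show ?thesis by (auto simp: guess_time_Cons one_enat_def)
qed

lemma space_S: "space (stream_space (measure_pmf Q)) = UNIV"
  by (simp add: space_stream_space)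

lemma pred_gt[measurable]: "Measurable.pred (stream_space (measure_pmf Q)) (\<lambda>w. guess_time x w = t)"
  by (rule measurable_compose[OF guess_time_meas]) simp

lemma sets_gt[measurable]: "{w. guess_time x w = t} \<in> sets (stream_space (measure_pmf Q))"
proof -
  have "{w \<in> space (stream_space (measure_pmf Q)). guess_time x w = t} \<in> sets (stream_space (measure_pmf Q))"
    by measurable
  then show ?thesis by (simp add: space_S)
qed

lemma prob_S: "prob_space (stream_space (measure_pmf Q))"
  by (rule prob_space.prob_space_stream_space[OF prob_space_measure_pmf])

lemma emeasure_compl_single: "emeasure (measure_pmf Q) (UNIV - {x}) = ennreal (1 - pmf Q x)"
proof -
  have "emeasure (measure_pmf Q) (space (measure_pmf Q) - {x}) =
        emeasure (measure_pmf Q) (space (measure_pmf Q)) - emeasure (measure_pmf Q) {x}"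
    by (rule emeasure_compl) (auto simp: emeasure_pmf_single)
  then show ?thesis using ennreal_minus[of "pmf Q x" 1] by (simp add: emeasure_pmf_single)
qed

lemma emeasure_A:
  "emeasure (stream_space (measure_pmf Q)) {w. guess_time x w = enat (Suc k)} = ennreal ((1 - pmf Q x)^k * pmf Q x)"
proof (induction k)
  case 0
  interpret S: prob_space "stream_space (measure_pmf Q)" by (rule prob_S)
  have "emeasure (stream_space (measure_pmf Q)) {w. guess_time x w = enat (Suc 0)}
      = (\<integral>\<^sup>+w. indicator {w. guess_time x w = enat (Suc 0)} w \<partial>stream_space (measure_pmf Q))"
    by simp
  also have "\<dots> = (\<integral>\<^sup>+y. (\<integral>\<^sup>+w. indicator {w. guess_time x w = enat (Suc 0)} (y ## w) \<partial>stream_space (measure_pmf Q)) \<partial>measure_pmf Q)"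
    by (rule prob_space.nn_integral_stream_space[OF prob_space_measure_pmf]) measurable
  also have "\<dots> = (\<integral>\<^sup>+y. indicator {x} y \<partial>measure_pmf Q)"
    by (intro nn_integral_cong) (simp add: indicator_def A0_Cons S.emeasure_space_1)
  also have "\<dots> = ennreal (pmf Q x)" by (simp add: emeasure_pmf_single)
  finally show ?case by simp
next
  case (Suc k)
  interpret S: prob_space "stream_space (measure_pmf Q)" by (rule prob_S)
  have "emeasure (stream_space (measure_pmf Q)) {w. guess_time x w = enat (Suc (Suc k))}
      = (\<integral>\<^sup>+w. indicator {w. guess_time x w = enat (Suc (Suc k))} w \<partial>stream_space (measure_pmf Q))"
    by simp
  also have "\<dots> = (\<integral>\<^sup>+y. (\<integral>\<^sup>+w. indicator {w. guess_time x w = enat (Suc (Suc k))} (y ## w) \<partial>stream_space (measure_pmf Q)) \<partial>measure_pmf Q)"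
    by (rule prob_space.nn_integral_stream_space[OF prob_space_measure_pmf]) measurable
  also have "\<dots> = (\<integral>\<^sup>+y. emeasure (stream_space (measure_pmf Q)) {w. guess_time x w = enat (Suc k)} * indicator (UNIV - {x}) y \<partial>measure_pmf Q)"
  proof (intro nn_integral_cong)
    fix y
    have "(\<lambda>w. indicator {w. guess_time x w = enat (Suc (Suc k))} (y ## w)) =
          (\<lambda>w. indicator (UNIV - {x}) y * indicator {w. guess_time x w = enat (Suc k)} w :: ennreal)"
      by (auto simp: indicator_def AS_Cons fun_eq_iff)
    then show "(\<integral>\<^sup>+w. indicator {w. guess_time x w = enat (Suc (Suc k))} (y ## w) \<partial>stream_space (measure_pmf Q))
       = emeasure (stream_space (measure_pmf Q)) {w. guess_time x w = enat (Suc k)} * indicator (UNIV - {x}) y"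
      by (simp add: nn_integral_cmult_indicator mult.commute)
  qed
  also have "\<dots> = emeasure (stream_space (measure_pmf Q)) {w. guess_time x w = enat (Suc k)} * ennreal (1 - pmf Q x)"
    by (simp add: nn_integral_cmult_indicator emeasure_compl_single)
  also have "\<dots> = ennreal ((1 - pmf Q x)^(Suc k) * pmf Q x)"
    unfolding Suc.IH by (simp add: ennreal_mult[symmetric] pmf_le_1 algebra_simps)
  finally show ?case .
qed



lemma measure_A:
  "measure (stream_space (measure_pmf Q)) {w. guess_time x w = enat (Suc k)} = (1 - pmf Q x)^k * pmf Q x"
  unfolding measure_def emeasure_A by (simp add: pmf_le_1)

lemma measure_Ainf:
  "measure (stream_space (measure_pmf Q)) {w. guess_time x w = \<infinity>} = (if pmf Q x > 0 then 0 else 1)"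
proof -
  interpret S: prob_space "stream_space (measure_pmf Q)" by (rule prob_S)
  let ?A = "\<lambda>k. {w. guess_time x w = enat (Suc k)}"
  have U: "{w. guess_time x w = \<infinity>} = space (stream_space (measure_pmf Q)) - (\<Union>k. ?A k)"
  proof -
    have "guess_time x w = \<infinity> \<longleftrightarrow> (\<forall>k. guess_time x w \<noteq> enat (Suc k))" for w
    proof (cases "guess_time x w")
      case (enat n)
      with guess_time_nz[of x w] have "n \<noteq> 0" by auto
      then obtain m where "n = Suc m" using not0_implies_Suc by blast
      with enat show ?thesis by auto
    qed simp
    then show ?thesis by (auto simp: space_S)
  qed
  have disj: "disjoint_family ?A" by (auto simp: disjoint_family_on_def)
  have su: "(\<lambda>k. measure (stream_space (measure_pmf Q)) (?A k)) sums measure (stream_space (measure_pmf Q)) (\<Union>k. ?A k)"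
    by (rule S.finite_measure_UNION[OF _ disj]) auto
  have su2: "(\<lambda>k. (1 - pmf Q x)^k * pmf Q x) sums (if pmf Q x > 0 then 1 else 0)"
  proof (cases "pmf Q x > 0")
    case True
    have "norm (1 - pmf Q x) < 1" using True pmf_le_1[of Q x] by auto
    from sums_mult2[OF geometric_sums[OF this], of "pmf Q x"]
    show ?thesis using True by simp
  next
    case False
    then have "pmf Q x = 0" using pmf_nonneg[of Q x] by linarith
    then show ?thesis by simp
  qed
  have "measure (stream_space (measure_pmf Q)) (\<Union>k. ?A k) = (if pmf Q x > 0 then 1 else 0)"
    using sums_unique2[OF su[unfolded measure_A] su2] .
  moreover have "measure (stream_space (measure_pmf Q)) {w. guess_time x w = \<infinity>} = 1 - measure (stream_space (measure_pmf Q)) (\<Union>k. ?A k)"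
    unfolding U by (rule S.prob_compl) auto
  ultimately show ?thesis by simp
qed

lemma V_decomp:
  "V_rho \<rho> x w = (\<Sum>k. ennreal (gbinom (real (Suc k) + \<rho> - 1) \<rho>) * indicator {w. guess_time x w = enat (Suc k)} w)
     + \<infinity> * indicator {w. guess_time x w = \<infinity>} w"
proof (cases "guess_time x w")
  case (enat n)
  with guess_time_nz[of x w] obtain m where m: "n = Suc m" using not0_implies_Suc by auto
  have "(\<lambda>k. ennreal (gbinom (real (Suc k) + \<rho> - 1) \<rho>) * indicator {w. guess_time x w = enat (Suc k)} w)
      = (\<lambda>k. if k = m then ennreal (gbinom (real (Suc k) + \<rho> - 1) \<rho>) else 0)"
    using enat m by (auto simp: fun_eq_iff indicator_def)
  then have "(\<Sum>k. ennreal (gbinom (real (Suc k) + \<rho> - 1) \<rho>) * indicator {w. guess_time x w = enat (Suc k)} w)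
      = ennreal (gbinom (real (Suc m) + \<rho> - 1) \<rho>)"
    using sums_unique[OF sums_single[of m "\<lambda>k. ennreal (gbinom (real (Suc k) + \<rho> - 1) \<rho>)"]] by simp
  then show ?thesis using enat m by (simp add: V_rho_def)
next
  case infinity
  then show ?thesis by (simp add: V_rho_def indicator_def)
qed

lemma int_V:
  assumes "\<rho> \<ge> 0"
  shows "(\<integral>\<^sup>+w. V_rho \<rho> x w \<partial>stream_space (measure_pmf Q)) = (if pmf Q x > 0 then ennreal (pmf Q x powr -\<rho>) else \<infinity>)"
proof -
  interpret S: prob_space "stream_space (measure_pmf Q)" by (rule prob_S)
  let ?S = "stream_space (measure_pmf Q)"
  let ?c = "\<lambda>k. gbinom (real (Suc k) + \<rho> - 1) \<rho>"
  let ?q = "pmf Q x"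
  have "(\<integral>\<^sup>+w. V_rho \<rho> x w \<partial>?S) = (\<integral>\<^sup>+w. (\<Sum>k. ennreal (?c k) * indicator {w. guess_time x w = enat (Suc k)} w)
     + \<infinity> * indicator {w. guess_time x w = \<infinity>} w \<partial>?S)"
    by (simp only: V_decomp)
  also have "\<dots> = (\<integral>\<^sup>+w. (\<Sum>k. ennreal (?c k) * indicator {w. guess_time x w = enat (Suc k)} w) \<partial>?S)
     + (\<integral>\<^sup>+w. \<infinity> * indicator {w. guess_time x w = \<infinity>} w \<partial>?S)"
    by (rule nn_integral_add) measurable
  also have "(\<integral>\<^sup>+w. (\<Sum>k. ennreal (?c k) * indicator {w. guess_time x w = enat (Suc k)} w) \<partial>?S)
     = (\<Sum>k. (\<integral>\<^sup>+w. ennreal (?c k) * indicator {w. guess_time x w = enat (Suc k)} w \<partial>?S))"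
    by (rule nn_integral_suminf) measurable
  also have "\<dots> = (\<Sum>k. ennreal (?c k) * ennreal ((1 - ?q)^k * ?q))"
    by (simp add: nn_integral_cmult_indicator emeasure_A)
  also have "(\<integral>\<^sup>+w. \<infinity> * indicator {w. guess_time x w = \<infinity>} w \<partial>?S) = \<infinity> * ennreal (if ?q > 0 then 0 else 1)"
    by (simp add: nn_integral_cmult_indicator S.emeasure_eq_measure measure_Ainf)
  finally have E: "(\<integral>\<^sup>+w. V_rho \<rho> x w \<partial>?S) = (\<Sum>k. ennreal (?c k) * ennreal ((1 - ?q)^k * ?q)) + \<infinity> * ennreal (if ?q > 0 then 0 else 1)" .
  show ?thesis
  proof (cases "?q > 0")
    case True
    have sv: "(\<lambda>k. ?c k * ((1 - ?q)^k * ?q)) sums (?q powr -\<rho>)"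
      by (rule series_V[OF assms True pmf_le_1])
    have nn: "0 \<le> ?c k * ((1 - ?q)^k * ?q)" for k
      using gbinom_nonneg[OF assms, of k] pmf_le_1[of Q x] pmf_nonneg[of Q x] by simp
    have "(\<Sum>k. ennreal (?c k) * ennreal ((1 - ?q)^k * ?q)) = (\<Sum>k. ennreal (?c k * ((1 - ?q)^k * ?q)))"
      using gbinom_nonneg[OF assms] pmf_le_1[of Q x] pmf_nonneg[of Q x] by (simp add: ennreal_mult)
    also have "\<dots> = ennreal (\<Sum>k. ?c k * ((1 - ?q)^k * ?q))"
      by (rule suminf_ennreal2[OF nn sums_summable[OF sv]])
    also have "\<dots> = ennreal (?q powr -\<rho>)" using sums_unique[OF sv] by simp
    finally show ?thesis using E True by simp
  next
    case False
    then show ?thesis using E by simp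
  qed
qed



lemma expected_V_sum:
  fixes P Q :: "'a::finite pmf"
  assumes "\<rho> \<ge> 0"
  shows "expected_V \<rho> P Q = (\<Sum>x\<in>UNIV. ennreal (pmf P x) * (if pmf Q x > 0 then ennreal (pmf Q x powr -\<rho>) else \<infinity>))"
proof -
  interpret S: prob_space "stream_space (measure_pmf Q)" by (rule prob_S)
  let ?S = "stream_space (measure_pmf Q)"
  have m1: "(\<lambda>z. V_rho \<rho> (fst z) (snd z)) \<in> borel_measurable (count_space UNIV \<Otimes>\<^sub>M ?S)"
  proof (rule measurable_pair_measure_countable1)
    show "countable (UNIV :: 'a set)" by simp
    fix x :: 'a
    show "(\<lambda>w. V_rho \<rho> (fst (x, w)) (snd (x, w))) \<in> borel_measurable ?S"
      using V_meas[of \<rho> x Q] by simp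
  qed
  have m2: "(\<lambda>z. V_rho \<rho> (fst z) (snd z)) \<in> borel_measurable (measure_pmf P \<Otimes>\<^sub>M ?S)"
  proof -
    have "sets (measure_pmf P \<Otimes>\<^sub>M ?S) = sets (count_space UNIV \<Otimes>\<^sub>M ?S)"
      by (rule sets_pair_measure_cong) (simp_all add: sets_measure_pmf_count_space)
    then show ?thesis using m1 measurable_cong_sets[of "measure_pmf P \<Otimes>\<^sub>M ?S" "count_space UNIV \<Otimes>\<^sub>M ?S" borel borel]
      by simp
  qed
  have "expected_V \<rho> P Q = (\<integral>\<^sup>+x. \<integral>\<^sup>+w. V_rho \<rho> (fst (x, w)) (snd (x, w)) \<partial>?S \<partial>measure_pmf P)"
    unfolding expected_V_def by (rule S.nn_integral_fst[OF m2, symmetric])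
  also have "\<dots> = (\<integral>\<^sup>+x. (if pmf Q x > 0 then ennreal (pmf Q x powr -\<rho>) else \<infinity>) \<partial>measure_pmf P)"
    by (simp add: int_V[OF assms])
  also have "\<dots> = (\<Sum>x\<in>UNIV. ennreal (pmf P x) * (if pmf Q x > 0 then ennreal (pmf Q x powr -\<rho>) else \<infinity>))"
    by (simp only: nn_integral_measure_pmf nn_integral_count_space_finite[OF finite_class.finite_UNIV])
  finally show ?thesis .
qed



lemma bern_deriv:
  assumes "p > 1" "x > 0"
  shows "((\<lambda>t. t powr p - p * t) has_real_derivative (p * x powr (p - 1) - p)) (at x)"
  using assms by (auto intro!: derivative_eq_intros has_real_derivative_powr)

lemma bern_strict:
  fixes t p :: real
  assumes "p > 1" "t > 0" "t \<noteq> 1"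
  shows "t powr p > 1 + p * (t - 1)"
proof -
  let ?f = "\<lambda>t. t powr p - p * t"
  let ?f' = "\<lambda>x. p * x powr (p - 1) - p"
  show ?thesis
  proof (cases "t > 1")
    case True
    have "\<exists>z. 1 < z \<and> z < t \<and> ?f t - ?f 1 = (t - 1) * ?f' z"
      by (rule MVT2[OF True]) (rule bern_deriv[OF assms(1)], simp)
    then obtain z where z: "1 < z" "z < t" "?f t - ?f 1 = (t - 1) * ?f' z" by blast
    have "z powr (p - 1) > 1" using z assms by simp
    then have "?f' z > 0" using assms by simp
    then have "(t - 1) * ?f' z > 0" using True by simp
    then show ?thesis using z(3) by (simp add: algebra_simps)
  next
    case False
    then have lt: "t < 1" using assms by simp
    have "\<exists>z. t < z \<and> z < 1 \<and> ?f 1 - ?f t = (1 - t) * ?f' z"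
      by (rule MVT2[OF lt]) (rule bern_deriv[OF assms(1)], use assms in simp)
    then obtain z where z: "t < z" "z < 1" "?f 1 - ?f t = (1 - t) * ?f' z" by blast
    have "z powr (p - 1) < 1 powr (p - 1)"
      by (rule powr_less_mono2) (use z assms in auto)
    then have "?f' z < 0" using assms by simp
    then have "(1 - t) * ?f' z < 0" using lt by (simp add: mult_pos_neg)
    then show ?thesis using z(3) by (simp add: algebra_simps)
  qed
qed

lemma pt_ineq:
  fixes p s q :: real
  assumes "p > 1" "s \<ge> 0" "q \<ge> 0" "s > 0 \<Longrightarrow> q > 0"
  shows "s powr p * q powr (1 - p) \<ge> p * s - (p - 1) * q"
    and "s powr p * q powr (1 - p) = p * s - (p - 1) * q \<longleftrightarrow> s = q"
proof -
  have "s powr p * q powr (1 - p) \<ge> p * s - (p - 1) * q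
     \<and> (s powr p * q powr (1 - p) = p * s - (p - 1) * q \<longleftrightarrow> s = q)"
  proof (cases "s = 0")
    case True
    then show ?thesis using assms by auto
  next
    case False
    then have s: "s > 0" using assms by simp
    then have q: "q > 0" using assms by simp
    define t where "t = s / q"
    have t: "t > 0" using s q by (simp add: t_def)
    have st: "s = t * q" using q by (simp add: t_def)
    have L: "s powr p * q powr (1 - p) = q * t powr p"
    proof -
      have "s powr p * q powr (1 - p) = t powr p * (q powr p * q powr (1 - p))"
        unfolding st using t q by (simp add: powr_mult)
      also have "q powr p * q powr (1 - p) = q powr (p + (1 - p))" by (rule powr_add[symmetric])
      finally show ?thesis using q by simp
    qed
    have R: "p * s - (p - 1) * q = q * (1 + p * (t - 1))" unfolding st by (simp add: algebra_simps)
    show ?thesis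
    proof (cases "t = 1")
      case True
      then show ?thesis using L R st by simp
    next
      case False
      have "t powr p > 1 + p * (t - 1)" by (rule bern_strict[OF assms(1) t False])
      then have "q * t powr p > q * (1 + p * (t - 1))" using q by simp
      moreover have "s \<noteq> q" using False st q by auto
      ultimately show ?thesis unfolding L R by auto
    qed
  qed
  then show "s powr p * q powr (1 - p) \<ge> p * s - (p - 1) * q"
    and "s powr p * q powr (1 - p) = p * s - (p - 1) * q \<longleftrightarrow> s = q" by auto
qed



lemma Sm_pos:
  fixes P :: "'a::finite pmf"
  assumes "a > 0"
  shows "(\<Sum>x\<in>UNIV. pmf P x powr a) > 0"
proof -
  have "(\<Sum>x\<in>UNIV. pmf P x) = 1"
    using sum_pmf_eq_1[of UNIV P] by simp
  then obtain x0 where "pmf P x0 \<noteq> 0" by (metis (no_types, lifting) sum.neutral zero_neq_one)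
  then have x0: "pmf P x0 > 0" using pmf_nonneg[of P x0] by linarith
  have "0 < pmf P x0 powr a" using x0 by simp
  also have "\<dots> \<le> (\<Sum>x\<in>UNIV. pmf P x powr a)"
    by (rule member_le_sum) auto
  finally show ?thesis .
qed

lemma key_real:
  fixes P Q :: "'a::finite pmf" and \<rho> :: real
  assumes rho: "\<rho> \<ge> 1"
    and good: "\<And>x. pmf P x > 0 \<Longrightarrow> pmf Q x > 0"
  defines "Sm \<equiv> (\<Sum>x'\<in>UNIV. pmf P x' powr (1 / (1 + \<rho>)))"
  shows "(\<Sum>x\<in>UNIV. pmf P x * pmf Q x powr -\<rho>) \<ge> Sm powr (1 + \<rho>)"
    and "(\<Sum>x\<in>UNIV. pmf P x * pmf Q x powr -\<rho>) = Sm powr (1 + \<rho>) \<longleftrightarrow>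
         (\<forall>x. pmf Q x = pmf P x powr (1 / (1 + \<rho>)) / Sm)"
proof -
  let ?p = "1 + \<rho>"
  let ?s = "\<lambda>x. pmf P x powr (1 / (1 + \<rho>)) / Sm"
  let ?q = "\<lambda>x. pmf Q x"
  let ?t = "\<lambda>x. ?s x powr ?p * ?q x powr (1 - ?p)"
  let ?r = "\<lambda>x. ?p * ?s x - (?p - 1) * ?q x"
  have Sm: "Sm > 0" unfolding Sm_def by (rule Sm_pos) (use rho in simp)
  have p1: "?p > 1" using rho by simp
  have s_nn: "?s x \<ge> 0" for x using Sm by simp
  have s_pos: "?s x > 0 \<longleftrightarrow> pmf P x > 0" for x
  proof
    assume "?s x > 0"
    then have "pmf P x powr (1 / (1 + \<rho>)) \<noteq> 0" by auto
    then have "pmf P x \<noteq> 0" by auto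
    then show "pmf P x > 0" using pmf_nonneg[of P x] by linarith
  next
    assume "pmf P x > 0"
    then show "?s x > 0" using Sm by simp
  qed
  have cond: "?s x > 0 \<Longrightarrow> ?q x > 0" for x using s_pos good by blast
  have trm: "pmf P x * pmf Q x powr -\<rho> = Sm powr ?p * ?t x" for x
  proof -
    have "Sm * ?s x = pmf P x powr (1 / (1 + \<rho>))" using Sm by simp
    then have "(Sm * ?s x) powr ?p = pmf P x"
      using rho by (simp add: powr_powr powr_one)
    moreover have "(Sm * ?s x) powr ?p = Sm powr ?p * ?s x powr ?p"
      by (rule powr_mult)
    ultimately have "pmf P x = Sm powr ?p * ?s x powr ?p" by simp
    then show ?thesis by (simp add: mult.assoc)
  qed
  have ge: "?t x \<ge> ?r x" for x by (rule pt_ineq(1)[OF p1 s_nn pmf_nonneg cond])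
  have eqi: "?t x = ?r x \<longleftrightarrow> ?s x = ?q x" for x by (rule pt_ineq(2)[OF p1 s_nn pmf_nonneg cond])
  have sum_s: "(\<Sum>x\<in>UNIV. ?s x) = 1"
    using Sm by (simp add: sum_divide_distrib[symmetric] Sm_def)
  have sum_q: "(\<Sum>x\<in>UNIV. ?q x) = 1" using sum_pmf_eq_1[of UNIV Q] by simp
  have sum_r: "(\<Sum>x\<in>UNIV. ?r x) = 1"
  proof -
    have "(\<Sum>x\<in>UNIV. ?r x) = (\<Sum>x\<in>UNIV. ?p * ?s x) - (\<Sum>x\<in>UNIV. (?p - 1) * ?q x)"
      by (rule sum_subtractf)
    also have "\<dots> = ?p * (\<Sum>x\<in>UNIV. ?s x) - (?p - 1) * (\<Sum>x\<in>UNIV. ?q x)"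
      by (simp only: sum_distrib_left)
    also have "\<dots> = 1" unfolding sum_s sum_q by simp
    finally show ?thesis .
  qed
  have L: "(\<Sum>x\<in>UNIV. pmf P x * pmf Q x powr -\<rho>) = Sm powr ?p * (\<Sum>x\<in>UNIV. ?t x)"
    by (simp add: trm sum_distrib_left)
  have "(\<Sum>x\<in>UNIV. ?t x) \<ge> (\<Sum>x\<in>UNIV. ?r x)" by (rule sum_mono) (rule ge)
  then have T1: "(\<Sum>x\<in>UNIV. ?t x) \<ge> 1" using sum_r by simp
  have Sp: "Sm powr ?p > 0" using Sm by simp
  show "(\<Sum>x\<in>UNIV. pmf P x * pmf Q x powr -\<rho>) \<ge> Sm powr ?p"
    unfolding L using T1 Sp by simp
  have "(\<Sum>x\<in>UNIV. pmf P x * pmf Q x powr -\<rho>) = Sm powr ?p \<longleftrightarrow> (\<Sum>x\<in>UNIV. ?t x) = 1"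
    unfolding L using Sp by simp
  also have "\<dots> \<longleftrightarrow> (\<Sum>x\<in>UNIV. ?t x - ?r x) = 0"
    using sum_r by (simp add: sum_subtractf)
  also have "\<dots> \<longleftrightarrow> (\<forall>x\<in>UNIV. ?t x - ?r x = 0)"
    by (rule sum_nonneg_eq_0_iff) (use ge in auto)
  also have "\<dots> \<longleftrightarrow> (\<forall>x. pmf Q x = ?s x)"
    using eqi by auto
  finally show "(\<Sum>x\<in>UNIV. pmf P x * pmf Q x powr -\<rho>) = Sm powr (1 + \<rho>) \<longleftrightarrow>
         (\<forall>x. pmf Q x = pmf P x powr (1 / (1 + \<rho>)) / Sm)" .
qed



lemma key_enn:
  fixes P Q :: "'a::finite pmf" and \<rho> :: real
  assumes rho: "\<rho> \<ge> 1"
  defines "Sm \<equiv> (\<Sum>x'\<in>UNIV. pmf P x' powr (1 / (1 + \<rho>)))"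
  shows "expected_V \<rho> P Q \<ge> ennreal (Sm powr (1 + \<rho>))"
    and "expected_V \<rho> P Q = ennreal (Sm powr (1 + \<rho>)) \<longleftrightarrow>
         (\<forall>x. pmf Q x = pmf P x powr (1 / (1 + \<rho>)) / Sm)"
proof -
  have r0: "\<rho> \<ge> 0" using rho by simp
  have Sm: "Sm > 0" unfolding Sm_def by (rule Sm_pos) (use rho in simp)
  have "expected_V \<rho> P Q \<ge> ennreal (Sm powr (1 + \<rho>)) \<and>
        (expected_V \<rho> P Q = ennreal (Sm powr (1 + \<rho>)) \<longleftrightarrow>
         (\<forall>x. pmf Q x = pmf P x powr (1 / (1 + \<rho>)) / Sm))"
  proof (cases "\<forall>x. pmf P x > 0 \<longrightarrow> pmf Q x > 0")
    case True
    have good: "\<And>x. pmf P x > 0 \<Longrightarrow> pmf Q x > 0" using True by blast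
    have tm: "ennreal (pmf P x) * (if pmf Q x > 0 then ennreal (pmf Q x powr -\<rho>) else \<infinity>)
              = ennreal (pmf P x * pmf Q x powr -\<rho>)" for x
    proof (cases "pmf Q x > 0")
      case True
      then show ?thesis by (simp add: ennreal_mult)
    next
      case False
      then have "\<not> pmf P x > 0" using good by blast
      then have "pmf P x = 0" using pmf_nonneg[of P x] by linarith
      then show ?thesis using False by simp
    qed
    have E: "expected_V \<rho> P Q = ennreal (\<Sum>x\<in>UNIV. pmf P x * pmf Q x powr -\<rho>)"
      unfolding expected_V_sum[OF r0] tm by (rule sum_ennreal) simp
    have k1: "(\<Sum>x\<in>UNIV. pmf P x * pmf Q x powr -\<rho>) \<ge> Sm powr (1 + \<rho>)"
      unfolding Sm_def by (rule key_real(1)[OF rho good])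
    have k2: "(\<Sum>x\<in>UNIV. pmf P x * pmf Q x powr -\<rho>) = Sm powr (1 + \<rho>) \<longleftrightarrow>
         (\<forall>x. pmf Q x = pmf P x powr (1 / (1 + \<rho>)) / Sm)"
      unfolding Sm_def by (rule key_real(2)[OF rho good])
    have nn: "(\<Sum>x\<in>UNIV. pmf P x * pmf Q x powr -\<rho>) \<ge> 0" by (intro sum_nonneg) simp
    show ?thesis unfolding E using k1 k2 nn Sm
      by (simp add: ennreal_le_iff ennreal_inj)
  next
    case False
    then obtain x0 where x0: "pmf P x0 > 0" "\<not> pmf Q x0 > 0" by blast
    have "ennreal (pmf P x0) * (if pmf Q x0 > 0 then ennreal (pmf Q x0 powr -\<rho>) else \<infinity>) = \<infinity>"
      using x0 by simp
    moreover have "ennreal (pmf P x0) * (if pmf Q x0 > 0 then ennreal (pmf Q x0 powr -\<rho>) else \<infinity>)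
        \<le> (\<Sum>x\<in>UNIV. ennreal (pmf P x) * (if pmf Q x > 0 then ennreal (pmf Q x powr -\<rho>) else \<infinity>))"
      by (rule member_le_sum) auto
    ultimately have E: "expected_V \<rho> P Q = \<infinity>"
      unfolding expected_V_sum[OF r0] by (simp add: top_unique)
    have "pmf P x0 powr (1 / (1 + \<rho>)) / Sm > 0" using x0 Sm by simp
    moreover have "pmf Q x0 = 0" using x0 pmf_nonneg[of Q x0] by linarith
    ultimately have "\<not> (\<forall>x. pmf Q x = pmf P x powr (1 / (1 + \<rho>)) / Sm)" by force
    then show ?thesis unfolding E by simp
  qed
  then show "expected_V \<rho> P Q \<ge> ennreal (Sm powr (1 + \<rho>))"
    and "expected_V \<rho> P Q = ennreal (Sm powr (1 + \<rho>)) \<longleftrightarrow>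
         (\<forall>x. pmf Q x = pmf P x powr (1 / (1 + \<rho>)) / Sm)" by auto
qed

theorem lemma2:
  fixes P :: "'a::finite pmf" and \<rho> :: real
  assumes "\<rho> \<ge> 1"
  shows "opt_expected_V \<rho> P < \<infinity>
    \<and> ln (enn2real (opt_expected_V \<rho> P)) = \<rho> * renyi_entropy (1 / (1 + \<rho>)) P
    \<and> (\<forall>Q :: 'a pmf. expected_V \<rho> P Q = opt_expected_V \<rho> P \<longleftrightarrow>
         (\<forall>x. pmf Q x = pmf P x powr (1 / (1 + \<rho>)) / (\<Sum>x'\<in>UNIV. pmf P x' powr (1 / (1 + \<rho>)))))"
proof -
  define Sm where "Sm = (\<Sum>x'\<in>UNIV. pmf P x' powr (1 / (1 + \<rho>)))"
  have Sm: "Sm > 0" unfolding Sm_def by (rule Sm_pos) (use assms in simp)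
  define f where "f x = pmf P x powr (1 / (1 + \<rho>)) / Sm" for x
  have fnn: "\<And>x. 0 \<le> f x" using Sm by (simp add: f_def)
  have fsum: "(\<integral>\<^sup>+x. ennreal (f x) \<partial>count_space UNIV) = 1"
  proof -
    have "(\<integral>\<^sup>+x. ennreal (f x) \<partial>count_space UNIV) = (\<Sum>x\<in>UNIV. ennreal (f x))"
      by (rule nn_integral_count_space_finite[OF finite_class.finite_UNIV])
    also have "\<dots> = ennreal (\<Sum>x\<in>UNIV. f x)" using fnn by simp
    also have "(\<Sum>x\<in>UNIV. f x) = 1" using Sm
      by (simp add: f_def sum_divide_distrib[symmetric] Sm_def[symmetric])
    finally show ?thesis by simp
  qed
  define Qs where "Qs = embed_pmf f"
  have pQs: "pmf Qs x = f x" for x unfolding Qs_def by (rule pmf_embed_pmf[OF fnn fsum])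
  have kQ: "expected_V \<rho> P Qs = ennreal (Sm powr (1 + \<rho>))"
    unfolding Sm_def by (subst key_enn(2)[OF assms]) (simp add: pQs f_def Sm_def)
  have opt: "opt_expected_V \<rho> P = ennreal (Sm powr (1 + \<rho>))"
  proof (rule antisym)
    show "opt_expected_V \<rho> P \<le> ennreal (Sm powr (1 + \<rho>))"
      unfolding opt_expected_V_def kQ[symmetric] by (rule INF_lower) simp
    show "ennreal (Sm powr (1 + \<rho>)) \<le> opt_expected_V \<rho> P"
      unfolding opt_expected_V_def Sm_def by (rule INF_greatest) (rule key_enn(1)[OF assms])
  qed
  have c1: "opt_expected_V \<rho> P < \<infinity>" unfolding opt by simp
  have c2: "ln (enn2real (opt_expected_V \<rho> P)) = \<rho> * renyi_entropy (1 / (1 + \<rho>)) P"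
  proof -
    have "ln (enn2real (opt_expected_V \<rho> P)) = (1 + \<rho>) * ln Sm"
      unfolding opt using Sm by simp
    moreover
    have coef: "\<rho> * (1 / (1 - 1 / (1 + \<rho>))) = 1 + \<rho>" using assms by (simp add: field_simps)
    have "\<rho> * renyi_entropy (1 / (1 + \<rho>)) P = (\<rho> * (1 / (1 - 1 / (1 + \<rho>)))) * ln Sm"
      unfolding renyi_entropy_def Sm_def by (simp only: mult.assoc)
    then have "\<rho> * renyi_entropy (1 / (1 + \<rho>)) P = (1 + \<rho>) * ln Sm" unfolding coef .
    ultimately show ?thesis by linarith
  qed
  have c3: "\<forall>Q :: 'a pmf. expected_V \<rho> P Q = opt_expected_V \<rho> P \<longleftrightarrow>
         (\<forall>x. pmf Q x = pmf P x powr (1 / (1 + \<rho>)) / (\<Sum>x'\<in>UNIV. pmf P x' powr (1 / (1 + \<rho>))))"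
    unfolding opt Sm_def using key_enn(2)[OF assms, of P] by blast
  show ?thesis using c1 c2 c3 by blast
qed

end
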